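(* Let $G$ be a finite simple undirected graph and $k \ge 1$ an integer. Suppose that $n \geq 3$ and that pairwise distinct $k$-cliques $A_1, \dots, A_n$ of $G$ are pairwise adjacent in $\mathsf{TS}_k(G)$. Then either there exist a clique $U \subseteq V(G)$ of size $k+1$ and pairwise distinct vertices $a_1, \dots, a_n \in U$ with $A_i = U \setminus \{a_i\}$ for all $1 \le i \le n$, or there exist a clique $I \subseteq V(G)$ of size $k-1$ and pairwise distinct vertices $a_1, \dots, a_n \in V(G) \setminus I$ with $A_i = I \cup \{a_i\}$ for all $1 \le i \le n$. In particular, if $n > k+1$, the second alternative holds.
   Context: A $k$-clique is a set of $k$ pairwise adjacent vertices. $\mathsf{TS}_k(G)$ is the graph whose vertices are the $k$-cliques of $G$, two $k$-cliques $C, C'$ being adjacent iff there are vertices $u,v$ with $C \setminus C' = \{u\}$, $C' \setminus C = \{v\}$ and $uv \in E(G)$. *)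

theory Defs
  imports Main
begin

definition simple_graph :: "'a set \<Rightarrow> ('a \<Rightarrow> 'a \<Rightarrow> bool) \<Rightarrow> bool" where
  "simple_graph V E \<longleftrightarrow> finite V \<and> (\<forall>u v. E u v \<longrightarrow> u \<in> V \<and> v \<in> V)
     \<and> (\<forall>u v. E u v \<longrightarrow> E v u) \<and> (\<forall>u. \<not> E u u)"

definition clique :: "'a set \<Rightarrow> ('a \<Rightarrow> 'a \<Rightarrow> bool) \<Rightarrow> 'a set \<Rightarrow> bool" where
  "clique V E C \<longleftrightarrow> C \<subseteq> V \<and> (\<forall>u\<in>C. \<forall>v\<in>C. u \<noteq> v \<longrightarrow> E u v)"

definition k_clique :: "'a set \<Rightarrow> ('a \<Rightarrow> 'a \<Rightarrow> bool) \<Rightarrow> nat \<Rightarrow> 'a set \<Rightarrow> bool" where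
  "k_clique V E k C \<longleftrightarrow> clique V E C \<and> finite C \<and> card C = k"

definition TS_adj :: "'a set \<Rightarrow> ('a \<Rightarrow> 'a \<Rightarrow> bool) \<Rightarrow> nat \<Rightarrow> 'a set \<Rightarrow> 'a set \<Rightarrow> bool" where
  "TS_adj V E k C C' \<longleftrightarrow> k_clique V E k C \<and> k_clique V E k C' \<and>
     (\<exists>u v. C - C' = {u} \<and> C' - C = {v} \<and> E u v)"

end

theory Submission
  imports Defs
begin

theorem lemma3p1:
  fixes V :: "'a set" and E :: "'a \<Rightarrow> 'a \<Rightarrow> bool" and k n :: nat
    and A :: "nat \<Rightarrow> 'a set"
  assumes G: "simple_graph V E"
    and k: "k \<ge> 1"
    and n: "n \<ge> 3"
    and cliques: "\<forall>i\<in>{1..n}. k_clique V E k (A i)"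
    and distinct: "inj_on A {1..n}"
    and adj: "\<forall>i\<in>{1..n}. \<forall>j\<in>{1..n}. i \<noteq> j \<longrightarrow> TS_adj V E k (A i) (A j)"
  shows "((\<exists>U a. clique V E U \<and> finite U \<and> card U = k + 1 \<and> inj_on a {1..n} \<and>
              (\<forall>i\<in>{1..n}. a i \<in> U \<and> A i = U - {a i}))
          \<or> (\<exists>I a. clique V E I \<and> finite I \<and> card I = k - 1 \<and> inj_on a {1..n} \<and>
              (\<forall>i\<in>{1..n}. a i \<in> V - I \<and> A i = I \<union> {a i})))
       \<and> (n > k + 1 \<longrightarrow>
           (\<exists>I a. clique V E I \<and> finite I \<and> card I = k - 1 \<and> inj_on a {1..n} \<and>
              (\<forall>i\<in>{1..n}. a i \<in> V - I \<and> A i = I \<union> {a i})))"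
proof -
  have i1: "1 \<in> {1..n}" and i2: "2 \<in> {1..n}" using n by auto
  have c1: "k_clique V E k (A 1)" and c2: "k_clique V E k (A 2)" using cliques i1 i2 by auto
  obtain u v where uv: "A 1 - A 2 = {u}" "A 2 - A 1 = {v}" "E u v"
    using adj i1 i2 unfolding TS_adj_def by fastforce
  define I where "I = A 1 - {u}"
  define U where "U = insert u (insert v I)"
  have uA1: "u \<in> A 1" "u \<notin> A 2" using uv by auto
  have vA2: "v \<in> A 2" "v \<notin> A 1" using uv by auto
  have uvne: "u \<noteq> v" using uA1 vA2 by auto
  have IA: "I = A 1 \<inter> A 2" using uv unfolding I_def by blast
  have A1I: "A 1 = insert u I" using uA1 unfolding I_def by blast
  have A2I: "A 2 = insert v I" using uv IA by blast
  have uI: "u \<notin> I" and vI: "v \<notin> I" using uA1 vA2 IA by auto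
  have fin1: "finite (A 1)" and card1: "card (A 1) = k" using c1 unfolding k_clique_def by auto
  have finI: "finite I" using fin1 unfolding I_def by auto
  have cardI: "card I = k - 1" using card1 uA1 fin1 unfolding I_def by auto
  have finU: "finite U" using finI unfolding U_def by auto
  have cardU: "card U = k + 1" using cardI finI uI vI uvne k unfolding U_def by auto
  have cl1: "clique V E (A 1)" and cl2: "clique V E (A 2)" using c1 c2 unfolding k_clique_def by auto
  have symE: "\<And>x y. E x y \<Longrightarrow> E y x" using G unfolding simple_graph_def by blast
  have cliqueI: "clique V E I" using cl1 unfolding clique_def I_def by blast
  have cliqueU: "clique V E U"
  proof -
    have "U = A 1 \<union> A 2" using A1I A2I unfolding U_def by blast
    moreover have "U \<subseteq> V" using cl1 cl2 calculation unfolding clique_def by blast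
    moreover have "\<forall>x\<in>U. \<forall>y\<in>U. x \<noteq> y \<longrightarrow> E x y"
    proof (intro ballI impI)
      fix x y assume xy: "x \<in> U" "y \<in> U" "x \<noteq> y"
      show "E x y"
      proof (cases "x \<in> A 1 \<and> y \<in> A 1")
        case True then show ?thesis using cl1 xy unfolding clique_def by blast
      next
        case f1: False
        show ?thesis
        proof (cases "x \<in> A 2 \<and> y \<in> A 2")
          case True then show ?thesis using cl2 xy unfolding clique_def by blast
        next
          case False
          then have "(x = u \<and> y = v) \<or> (x = v \<and> y = u)" using f1 xy A1I A2I unfolding U_def by blast
          then show ?thesis using uv(3) symE by blast
        qed
      qed
    qed
    ultimately show ?thesis unfolding clique_def by blast
  qed
  have Uu: "insert u I = U - {v}" and Uv: "insert v I = U - {u}" using uI vI uvne unfolding U_def by auto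
  have uU: "u \<in> U" and vU: "v \<in> U" unfolding U_def by auto
  define S where "S j = (\<exists>x. x \<notin> I \<and> A j = insert x I)" for j
  define T where "T j = (\<exists>x\<in>U. A j = U - {x})" for j
  have ST: "S j \<or> T j" if j: "j \<in> {1..n}" for j
  proof (cases "j = 1 \<or> j = 2")
    case True then show ?thesis using A1I A2I uI vI unfolding S_def by blast
  next
    case False
    then have j1: "j \<noteq> 1" and j2: "j \<noteq> 2" by auto
    obtain q p where qp: "A 1 - A j = {q}" "A j - A 1 = {p}"
      using adj i1 j j1 unfolding TS_adj_def by metis
    obtain q' p' where qp': "A 2 - A j = {q'}" "A j - A 2 = {p'}"
      using adj i2 j j2 unfolding TS_adj_def by metis
    have Aj: "A j = insert p (A 1 - {q})" using qp by blast
    show ?thesis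
    proof (cases "q = u")
      case True
      then have "A j = insert p I" using Aj unfolding I_def by simp
      moreover have "p \<notin> I" using qp unfolding I_def by blast
      ultimately show ?thesis unfolding S_def by blast
    next
      case False
      then have qI: "q \<in> I" using qp A1I by blast
      have qA2: "q \<in> A 2" using qI IA by blast
      have qnj: "q \<notin> A j" using qp(1) by blast
      have "q \<in> A 2 - A j" using qA2 qnj by simp
      then have "q' = q" using qp'(1) by simp
      have "v \<noteq> q" using qI vI by blast
      then have "v \<notin> A 2 - A j" using qp'(1) \<open>q' = q\<close> by simp
      then have "v \<in> A j" using vA2 by simp
      then have "v \<in> A j - A 1" using vA2 by simp
      then have "p = v" using qp(2) by (metis singletonD)
      have "U - {q} = insert v (A 1 - {q})" using A1I qI uI vI uvne unfolding U_def by blast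
      then have "A j = U - {q}" using Aj \<open>p = v\<close> by simp
      then show ?thesis using qI unfolding T_def U_def by blast
    qed
  qed
  have second: "\<exists>I a. clique V E I \<and> finite I \<and> card I = k - 1 \<and> inj_on a {1..n} \<and>
              (\<forall>i\<in>{1..n}. a i \<in> V - I \<and> A i = I \<union> {a i})"
    if nt: "\<exists>j\<in>{1..n}. \<not> T j"
  proof -
    from nt obtain j where j: "j \<in> {1..n}" "\<not> T j" by blast
    then obtain x where x: "x \<notin> I" "A j = insert x I" using ST unfolding S_def by blast
    have xU: "x \<notin> U"
    proof
      assume "x \<in> U"
      then have "x = u \<or> x = v" using x unfolding U_def by blast
      then have "A j = U - {v} \<or> A j = U - {u}" using x Uu Uv by auto
      then have "T j" using uU vU unfolding T_def by blast
      then show False using j by blast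
    qed
    have allS: "S i" if i: "i \<in> {1..n}" for i
    proof (rule ccontr)
      assume nS: "\<not> S i"
      then have "T i" using ST i by blast
      then obtain y where y: "y \<in> U" "A i = U - {y}" unfolding T_def by blast
      have "y \<noteq> u" using y nS Uv uI vI unfolding S_def by auto
      moreover have "y \<noteq> v" using y nS Uu uI vI unfolding S_def by auto
      ultimately have "y \<in> I" using y(1) unfolding U_def by auto
      then have "u \<in> A i - A j" "v \<in> A i - A j" using y x xU uI vI uvne unfolding U_def by auto
      moreover have "i \<noteq> j" using \<open>\<not> S i\<close> x unfolding S_def by blast
      then obtain w where "A i - A j = {w}" using adj i j(1) unfolding TS_adj_def by metis
      ultimately show False using uvne by (metis singletonD)
    qed
    define a where "a i = (SOME x. x \<notin> I \<and> A i = insert x I)" for i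
    have a: "a i \<notin> I \<and> A i = insert (a i) I" if "i \<in> {1..n}" for i
      using allS[OF that] unfolding S_def a_def by (rule someI_ex)
    have aV: "a i \<in> V" if i: "i \<in> {1..n}" for i
      using a[OF i] cliques i unfolding k_clique_def clique_def by blast
    have inj: "inj_on a {1..n}"
    proof (rule inj_onI)
      fix i j assume "i \<in> {1..n}" "j \<in> {1..n}" "a i = a j"
      then have "A i = A j" using a by metis
      then show "i = j" using distinct \<open>i \<in> {1..n}\<close> \<open>j \<in> {1..n}\<close> inj_onD by metis
    qed
    show ?thesis
      by (rule exI[of _ I], rule exI[of _ a]) (use cliqueI finI cardI inj a aV in auto)
  qed
  show ?thesis
  proof (cases "\<forall>j\<in>{1..n}. T j")
    case False
    then show ?thesis using second by blast
  next
    case True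
    define a where "a i = (SOME x. x \<in> U \<and> A i = U - {x})" for i
    have a: "a i \<in> U \<and> A i = U - {a i}" if "i \<in> {1..n}" for i
      using True that unfolding T_def a_def by (metis (mono_tags, lifting) someI_ex)
    have inj: "inj_on a {1..n}"
    proof (rule inj_onI)
      fix i j assume "i \<in> {1..n}" "j \<in> {1..n}" "a i = a j"
      then have "A i = A j" using a by metis
      then show "i = j" using distinct \<open>i \<in> {1..n}\<close> \<open>j \<in> {1..n}\<close> inj_onD by metis
    qed
    have "a ` {1..n} \<subseteq> U" using a by blast
    then have "card (a ` {1..n}) \<le> card U" using finU card_mono by blast
    then have "n \<le> k + 1" using card_image[OF inj] cardU by simp
    moreover have "\<exists>U a. clique V E U \<and> finite U \<and> card U = k + 1 \<and> inj_on a {1..n} \<and>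
              (\<forall>i\<in>{1..n}. a i \<in> U \<and> A i = U - {a i})"
      using cliqueU finU cardU inj a by blast
    ultimately show ?thesis by auto
  qed
qed

end
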